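(* The sets $\mathsf{M}^s\cap\mathsf{M}^n$ (of Epstein models) and $\mathsf{R}^s\cap\mathsf{R}^n$ (of Epstein relations) are undefinable.
   Context: Language: propositional letters $\Phi=\{p_0,p_1,\dots\}$; connectives $\neg$, $\lor,\wedge,\to,\leftrightarrow,\vartriangle,\looparrowright$; $\mathsf{FOR}$ the set of all formulas. An Epstein model is $\langle v,\mathfrak{R}\rangle$ with $v:\Phi\to\{0,1\}$ and $\mathfrak{R}\subseteq\mathsf{FOR}^2$ (an Epstein relation); truth: letters via $v$, boolean connectives classical, $\langle v,\mathfrak{R}\rangle\vDash\varphi\vartriangle\psi$ iff both true and $\langle\varphi,\psi\rangle\in\mathfrak{R}$; $\langle v,\mathfrak{R}\rangle\vDash\varphi\looparrowright\psi$ iff $\varphi\to\psi$ true and $\langle\varphi,\psi\rangle\in\mathfrak{R}$. $\mathfrak{R}\vDash\varphi$ iff true under every valuation. $\mathsf{R}^s$: symmetric relations; $\mathsf{R}^n$: relations $\mathfrak{R}$ with $\langle\neg\varphi,\psi\rangle\in\mathfrak{R}\Rightarrow\langle\varphi,\psi\rangle\in\mathfrak{R}$ for all $\varphi,\psi$; $\mathsf{M}^s$, $\mathsf{M}^n$: all models $\langle v,\mathfrak{R}\rangle$ with $\mathfrak{R}\in\mathsf{R}^s$, resp. $\mathfrak{R}\in\mathsf{R}^n$. A set $\mathsf{K}$ of relations (resp. models) is definable iff there is $\Gamma\subseteq\mathsf{FOR}$ such that for every relation $\mathfrak{R}$ (resp. model $\mathfrak{M}$): $\Gamma$ is valid on $\mathfrak{R}$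 (resp. true in $\mathfrak{M}$) iff it belongs to $\mathsf{K}$. *)

theory Defs
  imports Main
begin

datatype form =
    Var nat
  | Neg form
  | Disj form form
  | Conj form form
  | Impl form form
  | Equiv form form
  | ETri form form
  | ELoop form form

type_synonym erel = "(form \<times> form) set"

type_synonym emodel = "(nat \<Rightarrow> bool) \<times> erel"

fun holds :: "(nat \<Rightarrow> bool) \<Rightarrow> erel \<Rightarrow> form \<Rightarrow> bool" where
  "holds v R (Var n) = v n"
| "holds v R (Neg a) = (\<not> holds v R a)"
| "holds v R (Disj a b) = (holds v R a \<or> holds v R b)"
| "holds v R (Conj a b) = (holds v R a \<and> holds v R b)"
| "holds v R (Impl a b) = (holds v R a \<longrightarrow> holds v R b)"
| "holds v R (Equiv a b) = (holds v R a \<longleftrightarrow> holds v R b)"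
| "holds v R (ETri a b) = (holds v R a \<and> holds v R b \<and> (a, b) \<in> R)"
| "holds v R (ELoop a b) = ((holds v R a \<longrightarrow> holds v R b) \<and> (a, b) \<in> R)"

definition model_true :: "emodel \<Rightarrow> form \<Rightarrow> bool" where
  "model_true M \<phi> = holds (fst M) (snd M) \<phi>"

definition rel_valid :: "erel \<Rightarrow> form \<Rightarrow> bool" where
  "rel_valid R \<phi> = (\<forall>v. holds v R \<phi>)"

definition Rs :: "erel set" where
  "Rs = {R. sym R}"

definition Rn :: "erel set" where
  "Rn = {R. \<forall>\<phi> \<psi>. (Neg \<phi>, \<psi>) \<in> R \<longrightarrow> (\<phi>, \<psi>) \<in> R}"

definition Ms :: "emodel set" where
  "Ms = {M. snd M \<in> Rs}"

definition Mn :: "emodel set" where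
  "Mn = {M. snd M \<in> Rn}"

definition rel_definable :: "erel set \<Rightarrow> bool" where
  "rel_definable K = (\<exists>\<Gamma>::form set. \<forall>R. (\<forall>\<phi>\<in>\<Gamma>. rel_valid R \<phi>) \<longleftrightarrow> R \<in> K)"

definition model_definable :: "emodel set \<Rightarrow> bool" where
  "model_definable K = (\<exists>\<Gamma>::form set. \<forall>M. (\<forall>\<phi>\<in>\<Gamma>. model_true M \<phi>) \<longleftrightarrow> M \<in> K)"

end

theory Submission
  imports Defs
begin

definition tA :: form where "tA = Impl (Var 0) (Var 0)"
definition Rx :: erel where "Rx = UNIV - {(tA, Neg tA)}"

lemma same: "holds v UNIV \<phi> = holds v Rx \<phi>"
  by (induction \<phi>) (auto simp: Rx_def tA_def)

lemma UNIV_in: "UNIV \<in> Rs \<inter> Rn"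
  by (auto simp: Rs_def Rn_def sym_def)

lemma Rx_notin: "Rx \<notin> Rs \<inter> Rn"
  by (auto simp: Rs_def Rn_def Rx_def)

theorem mainTheorem13:
  shows "\<not> model_definable (Ms \<inter> Mn) \<and> \<not> rel_definable (Rs \<inter> Rn)"
proof
  show "\<not> model_definable (Ms \<inter> Mn)"
  proof
    assume "model_definable (Ms \<inter> Mn)"
    then obtain G where G: "\<And>M. (\<forall>\<phi>\<in>G. model_true M \<phi>) \<longleftrightarrow> M \<in> Ms \<inter> Mn"
      by (auto simp: model_definable_def)
    have "(\<lambda>_. True, UNIV) \<in> Ms \<inter> Mn" using UNIV_in by (auto simp: Ms_def Mn_def)
    hence "\<forall>\<phi>\<in>G. model_true (\<lambda>_. True, UNIV) \<phi>" using G by blast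
    hence "\<forall>\<phi>\<in>G. model_true (\<lambda>_. True, Rx) \<phi>" by (simp add: model_true_def same)
    hence "(\<lambda>_. True, Rx) \<in> Ms \<inter> Mn" using G by blast
    thus False using Rx_notin by (auto simp: Ms_def Mn_def)
  qed
  show "\<not> rel_definable (Rs \<inter> Rn)"
  proof
    assume "rel_definable (Rs \<inter> Rn)"
    then obtain G where G: "\<And>R. (\<forall>\<phi>\<in>G. rel_valid R \<phi>) \<longleftrightarrow> R \<in> Rs \<inter> Rn"
      by (auto simp: rel_definable_def)
    hence "\<forall>\<phi>\<in>G. rel_valid UNIV \<phi>" using UNIV_in by blast
    hence "\<forall>\<phi>\<in>G. rel_valid Rx \<phi>" by (simp add: rel_valid_def same)
    hence "Rx \<in> Rs \<inter> Rn" using G by blast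
    thus False using Rx_notin by blast
  qed
qed

end
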